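(* Let $X$ be a real Banach space such that for every $\varepsilon>0$, every finite dimensional subspace $Z$ of $X$ and every $n\in\mathbb N$ there exists a linear operator $T:\ell_\infty^n\to X$ with $\|T\|\le1$ such that $\|z+T(y)\|\ge(1-\varepsilon)(\|z\|+\|y\|)$ for every $y\in\ell_\infty^n$ and every $z\in Z$. Then for every non-zero real Banach space $Y$ and every closed subspace $H$ of $L(Y,X)$ containing $F(Y,X)$, the norm of $H$ (the operator norm) is octahedral.
   Context: $L(Y,X)$ is the space of bounded linear operators from $Y$ to $X$ with the operator norm and $F(Y,X)$ is its subspace of finite-rank operators. A Banach space $W$ is octahedral if for every finite dimensional subspace $E$ of $W$ and every $\varepsilon>0$ there exists $y\in W$, $\|y\|=1$, with $\|x+\lambda y\|\ge(1-\varepsilon)(\|x\|+|\lambda|)$ for all $x\in E$, $\lambda\in\mathbb R$. *)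

theory Defs
  imports "HOL-Analysis.Analysis"
begin

definition fin_dim_subspace :: "'a::real_vector set \<Rightarrow> bool" where
  "fin_dim_subspace E \<longleftrightarrow> (\<exists>B. finite B \<and> E = span B)"

(* sup-norm of ell_infty^n, where a vector of ell_infty^n is represented by its
   coordinates a 0, ..., a (n-1) (values of a at indices >= n are ignored) *)
definition linf_norm :: "nat \<Rightarrow> (nat \<Rightarrow> real) \<Rightarrow> real" where
  "linf_norm n a = Max (insert 0 {\<bar>a i\<bar> | i. i < n})"

(* the linear operator ell_infty^n -> X sending the i-th unit vector to x i;
   every linear operator ell_infty^n -> X is of this form *)
definition linf_op :: "nat \<Rightarrow> (nat \<Rightarrow> 'a::real_vector) \<Rightarrow> (nat \<Rightarrow> real) \<Rightarrow> 'a" where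
  "linf_op n x a = (\<Sum>i<n. a i *\<^sub>R x i)"

definition finite_rank :: "('a::real_normed_vector \<Rightarrow>\<^sub>L 'b::real_normed_vector) \<Rightarrow> bool" where
  "finite_rank T \<longleftrightarrow> (\<exists>B. finite B \<and> range (blinfun_apply T) \<subseteq> span B)"

definition octahedral :: "'a::real_normed_vector set \<Rightarrow> bool" where
  "octahedral H \<longleftrightarrow>
     (\<forall>E \<epsilon>. E \<subseteq> H \<and> fin_dim_subspace E \<and> \<epsilon> > 0 \<longrightarrow>
        (\<exists>y\<in>H. norm y = 1 \<and>
           (\<forall>x\<in>E. \<forall>t::real. norm (x + t *\<^sub>R y) \<ge> (1 - \<epsilon>) * (norm x + \<bar>t\<bar>))))"

end

theory Submission
  imports Defs
begin


lemma hb_norming: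
  fixes y0 :: "'a::real_normed_vector"
  shows "\<exists>f. linear f \<and> (\<forall>v. \<bar>f v\<bar> \<le> norm v) \<and> f y0 = norm y0"
proof -
  define good where "good G \<longleftrightarrow> (y0, norm y0) \<in> G \<and>
      (\<forall>u a v b c. (u,a) \<in> G \<longrightarrow> (v,b) \<in> G \<longrightarrow> (u + c *\<^sub>R v, a + c*b) \<in> G) \<and>
      (\<forall>v r. (v,r) \<in> G \<longrightarrow> r \<le> norm v)" for G :: "('a \<times> real) set"
  define G0 where "G0 = {(c *\<^sub>R y0, c * norm y0) | c. True}"
  have gG0: "good G0"
    unfolding good_def G0_def
  proof (intro conjI allI impI)
    show "(y0, norm y0) \<in> {(c *\<^sub>R y0, c * norm y0) |c. True}"
      by (rule CollectI, rule exI[of _ 1]) simp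
  next
    fix u a v b c
    assume "(u, a) \<in> {(c *\<^sub>R y0, c * norm y0) |c. True}" "(v, b) \<in> {(c *\<^sub>R y0, c * norm y0) |c. True}"
    then obtain c1 c2 where "u = c1 *\<^sub>R y0" "a = c1 * norm y0" "v = c2 *\<^sub>R y0" "b = c2 * norm y0" by auto
    then show "(u + c *\<^sub>R v, a + c * b) \<in> {(c *\<^sub>R y0, c * norm y0) |c. True}"
      by (intro CollectI exI[of _ "c1 + c * c2"]) (simp add: algebra_simps)
  next
    fix v r assume "(v, r) \<in> {(c *\<^sub>R y0, c * norm y0) |c. True}"
    then obtain c where "v = c *\<^sub>R y0" "r = c * norm y0" by auto
    then show "r \<le> norm v" by (simp add: mult_right_mono)
  qed
  have "\<exists>M\<in>Collect good. \<forall>X\<in>Collect good. M \<subseteq> X \<longrightarrow> X = M"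
  proof (rule Zorn_Lemma2, intro ballI)
    fix C assume C: "C \<in> chains (Collect good)"
    show "\<exists>U\<in>Collect good. \<forall>X\<in>C. X \<subseteq> U"
    proof (cases "C = {}")
      case True then show ?thesis using gG0 by auto
    next
      case False
      have Cg: "\<And>X. X \<in> C \<Longrightarrow> good X" and ch: "\<And>X Y. X \<in> C \<Longrightarrow> Y \<in> C \<Longrightarrow> X \<subseteq> Y \<or> Y \<subseteq> X"
        using C unfolding chains_def chain_subset_def by auto
      have "good (\<Union>C)"
        unfolding good_def
      proof (intro conjI allI impI)
        obtain X where "X \<in> C" using False by auto
        then show "(y0, norm y0) \<in> \<Union>C" using Cg unfolding good_def by auto
      next
        fix u a v b c assume "(u, a) \<in> \<Union>C" "(v, b) \<in> \<Union>C"
        then obtain X Y where XY: "X \<in> C" "Y \<in> C" "(u,a) \<in> X" "(v,b) \<in> Y" by auto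
        show "(u + c *\<^sub>R v, a + c * b) \<in> \<Union>C"
        proof (cases "X \<subseteq> Y")
          case True then show ?thesis using XY Cg[of Y] unfolding good_def by blast
        next
          case False then have "Y \<subseteq> X" using ch XY by blast
          then show ?thesis using XY Cg[of X] unfolding good_def by blast
        qed
      next
        fix v r assume "(v, r) \<in> \<Union>C"
        then show "r \<le> norm v" using Cg unfolding good_def by blast
      qed
      then show ?thesis by auto
    qed
  qed
  then obtain M where gM: "good M" and maxM: "\<And>X. good X \<Longrightarrow> M \<subseteq> X \<Longrightarrow> X = M" by auto
  have y0M: "(y0, norm y0) \<in> M"
    and clM: "\<And>u a v b c. (u,a) \<in> M \<Longrightarrow> (v,b) \<in> M \<Longrightarrow> (u + c *\<^sub>R v, a + c*b) \<in> M"
    and bdM: "\<And>v r. (v,r) \<in> M \<Longrightarrow> r \<le> norm v"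
    using gM unfolding good_def by blast+
  have zM: "(0, 0) \<in> M" using clM[OF y0M y0M, of "-1"] by simp
  have scM: "(c *\<^sub>R v, c * b) \<in> M" if "(v,b) \<in> M" for c v b
    using clM[OF zM that, of c] by simp
  have addM: "(u + v, a + b) \<in> M" if "(u,a) \<in> M" "(v,b) \<in> M" for u a v b
    using clM[OF that, of 1] by simp
  have tot: "\<exists>r. (w, r) \<in> M" for w
  proof (rule ccontr)
    assume nw: "\<nexists>r. (w, r) \<in> M"
    define S where "S = {a - norm (u - w) | u a. (u,a) \<in> M}"
    define k where "k = Sup S"
    have key: "a - norm (u - w) \<le> norm (v + w) - b" if "(u,a) \<in> M" "(v,b) \<in> M" for u a v b
    proof -
      have "a + b \<le> norm (u + v)" using bdM[OF addM[OF that]] .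
      also have "\<dots> = norm ((u - w) + (v + w))" by simp
      also have "\<dots> \<le> norm (u - w) + norm (v + w)" by (rule norm_triangle_ineq)
      finally show ?thesis by simp
    qed
    have Sne: "S \<noteq> {}" using zM unfolding S_def by blast
    have Sbd: "\<And>s. s \<in> S \<Longrightarrow> s \<le> norm (v + w) - b" if "(v,b) \<in> M" for v b
      using key[OF _ that] unfolding S_def by blast
    have kup: "a - norm (u - w) \<le> k" if "(u,a) \<in> M" for u a
      unfolding k_def
      by (rule cSup_upper) (use that Sbd[OF zM] in \<open>auto simp: S_def bdd_above_def\<close>)
    have klow: "k \<le> norm (v + w) - b" if "(v,b) \<in> M" for v b
      unfolding k_def by (rule cSup_least[OF Sne Sbd[OF that]])
    define G' where "G' = {(u + c *\<^sub>R w, a + c * k) | u a c. (u,a) \<in> M}"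
    have MG': "M \<subseteq> G'"
    proof
      fix p assume "p \<in> M"
      then obtain u a where "p = (u,a)" "(u,a) \<in> M" by (cases p) auto
      moreover have "p = (u + 0 *\<^sub>R w, a + 0 * k)" using \<open>p = (u,a)\<close> by simp
      ultimately show "p \<in> G'" unfolding G'_def by blast
    qed
    have "good G'"
      unfolding good_def
    proof (intro conjI allI impI)
      show "(y0, norm y0) \<in> G'" using MG' y0M by auto
    next
      fix u a v b c assume "(u, a) \<in> G'" "(v, b) \<in> G'"
      then obtain u1 a1 c1 u2 a2 c2 where h: "(u1,a1) \<in> M" "(u2,a2) \<in> M"
        "u = u1 + c1 *\<^sub>R w" "a = a1 + c1 * k" "v = u2 + c2 *\<^sub>R w" "b = a2 + c2 * k"
        unfolding G'_def by blast
      have "(u1 + c *\<^sub>R u2, a1 + c * a2) \<in> M" using clM[OF h(1,2)] .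
      moreover have "u + c *\<^sub>R v = (u1 + c *\<^sub>R u2) + (c1 + c * c2) *\<^sub>R w"
        "a + c * b = (a1 + c * a2) + (c1 + c * c2) * k"
        using h by (simp_all add: algebra_simps)
      ultimately show "(u + c *\<^sub>R v, a + c * b) \<in> G'" unfolding G'_def by blast
    next
      fix v r assume "(v, r) \<in> G'"
      then obtain u a c where h: "(u,a) \<in> M" "v = u + c *\<^sub>R w" "r = a + c * k"
        unfolding G'_def by blast
      consider "c = 0" | "c > 0" | "c < 0" by linarith
      then show "r \<le> norm v"
      proof cases
        case 1 then show ?thesis using h bdM by simp
      next
        case 2
        have "k \<le> norm ((1/c) *\<^sub>R u + w) - (1/c) * a" using klow[OF scM[OF h(1)]] .
        then have "c * k \<le> c * (norm ((1/c) *\<^sub>R u + w) - (1/c) * a)" using 2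
          by (intro mult_left_mono) auto
        also have "\<dots> = c * norm ((1/c) *\<^sub>R u + w) - a" using 2 by (simp add: algebra_simps)
        also have "c * norm ((1/c) *\<^sub>R u + w) = norm (u + c *\<^sub>R w)"
        proof -
          have "c * norm ((1/c) *\<^sub>R u + w) = norm (c *\<^sub>R ((1/c) *\<^sub>R u + w))" using 2 by simp
          also have "c *\<^sub>R ((1/c) *\<^sub>R u + w) = u + c *\<^sub>R w" using 2 by (simp add: algebra_simps)
          finally show ?thesis .
        qed
        finally show ?thesis using h by simp
      next
        case 3
        define d where "d = - c"
        have d: "d > 0" using 3 d_def by simp
        have "(1/d) * a - norm ((1/d) *\<^sub>R u - w) \<le> k" using kup[OF scM[OF h(1)]] .
        then have "d * ((1/d) * a - norm ((1/d) *\<^sub>R u - w)) \<le> d * k" using d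
          by (simp add: mult_left_mono)
        moreover have "d * ((1/d) * a - norm ((1/d) *\<^sub>R u - w)) = a - norm (u - d *\<^sub>R w)"
        proof -
          have "d * norm ((1/d) *\<^sub>R u - w) = norm (d *\<^sub>R ((1/d) *\<^sub>R u - w))" using d by simp
          also have "d *\<^sub>R ((1/d) *\<^sub>R u - w) = u - d *\<^sub>R w" using d by (simp add: algebra_simps)
          finally show ?thesis using d by (simp add: algebra_simps)
        qed
        ultimately show ?thesis using h d_def by (simp add: algebra_simps)
      qed
    qed
    then have "G' = M" using maxM MG' by blast
    moreover have "(w, k) \<in> G'" unfolding G'_def using zM by (intro CollectI exI[of _ 0] exI[of _ 0] exI[of _ 1]) simp
    ultimately show False using nw by auto
  qed
  have uniq: "r = s" if "(v,r) \<in> M" "(v,s) \<in> M" for v r s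
  proof -
    have "(v + (-1) *\<^sub>R v, r + (-1) * s) \<in> M" "(v + (-1) *\<^sub>R v, s + (-1) * r) \<in> M"
      using clM that by blast+
    then have "r - s \<le> 0" "s - r \<le> 0" using bdM by force+
    then show ?thesis by simp
  qed
  define f where "f v = (THE r. (v,r) \<in> M)" for v
  have fM: "(v, f v) \<in> M" for v
    unfolding f_def using tot[of v] uniq by (metis theI)
  have fval: "(v,r) \<in> M \<Longrightarrow> f v = r" for v r using uniq fM by blast
  have "linear f"
  proof (rule linearI)
    show "f (x + y) = f x + f y" for x y using fval[OF addM[OF fM fM]] .
    show "f (c *\<^sub>R x) = c *\<^sub>R f x" for c x using fval[OF scM[OF fM]] by simp
  qed
  moreover have "\<bar>f v\<bar> \<le> norm v" for v
    using bdM[OF fM[of v]] bdM[OF scM[OF fM[of v], of "-1"]] by simp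
  moreover have "f y0 = norm y0" using fval[OF y0M] .
  ultimately show ?thesis by blast
qed



lemma compact_box_fun:
  fixes B :: "'a set" and R :: real
  shows "compact (PiE UNIV (\<lambda>b. if b \<in> B then {-R..R} else {0}))"
proof -
  have "compactin (product_topology (\<lambda>_. euclidean) UNIV) (PiE UNIV (\<lambda>b. if b \<in> B then {-R..R} else {0::real}))"
    unfolding compactin_PiE by (auto simp: compactin_euclidean_iff)
  then show ?thesis by (simp add: euclidean_product_topology compactin_euclidean_iff)
qed

lemma cont_lincomb:
  fixes B :: "'a::real_normed_vector set"
  shows "continuous_on UNIV (\<lambda>c. \<Sum>b\<in>B. c b *\<^sub>R b)"
  by (intro continuous_intros) auto

lemma indep_bounded_below:
  fixes B :: "'a::real_normed_vector set"
  assumes fin: "finite B" and ind: "independent B"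
  shows "\<exists>m>0. \<forall>c. m * (\<Sum>b\<in>B. \<bar>c b\<bar>) \<le> norm (\<Sum>b\<in>B. c b *\<^sub>R b)"
proof (cases "B = {}")
  case True then show ?thesis by (intro exI[of _ 1]) simp
next
  case False
  then obtain b1 where b1: "b1 \<in> B" by auto
  define K where "K = PiE UNIV (\<lambda>b. if b \<in> B then {-1..1} else {0::real}) \<inter> {c. (\<Sum>b\<in>B. \<bar>c b\<bar>) = 1}"
  have "closed {c::'a\<Rightarrow>real. (\<Sum>b\<in>B. \<bar>c b\<bar>) = 1}"
    by (rule closed_Collect_eq) (intro continuous_intros; auto)+
  then have cK: "compact K" unfolding K_def
    using compact_box_fun[of B 1] by (intro compact_Int_closed) auto
  define c1 where "c1 = (\<lambda>b. if b = b1 then 1 else 0::real)"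
  have "c1 \<in> K" unfolding K_def c1_def using b1 fin by (auto simp: if_distrib cong: if_cong)
  then have Kne: "K \<noteq> {}" by auto
  have "continuous_on K (\<lambda>c. norm (\<Sum>b\<in>B. c b *\<^sub>R b))"
    by (intro continuous_intros continuous_on_subset[OF continuous_on_product_coordinates]) auto
  from continuous_attains_inf[OF cK Kne this] obtain c0 where c0: "c0 \<in> K"
    and c0min: "\<And>c. c \<in> K \<Longrightarrow> norm (\<Sum>b\<in>B. c0 b *\<^sub>R b) \<le> norm (\<Sum>b\<in>B. c b *\<^sub>R b)" by blast
  define m where "m = norm (\<Sum>b\<in>B. c0 b *\<^sub>R b)"
  have "m > 0"
  proof (rule ccontr)
    assume "\<not> m > 0"
    then have z: "(\<Sum>b\<in>B. c0 b *\<^sub>R b) = 0" unfolding m_def by simp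
    have "\<forall>b\<in>B. c0 b = 0"
      using ind z fin unfolding dependent_finite[OF fin] by blast
    then have "(\<Sum>b\<in>B. \<bar>c0 b\<bar>) = 0" by simp
    then show False using c0 unfolding K_def by simp
  qed
  moreover have "m * (\<Sum>b\<in>B. \<bar>c b\<bar>) \<le> norm (\<Sum>b\<in>B. c b *\<^sub>R b)" for c
  proof -
    define s where "s = (\<Sum>b\<in>B. \<bar>c b\<bar>)"
    show ?thesis
    proof (cases "s = 0")
      case True then show ?thesis unfolding s_def by simp
    next
      case False
      have spos: "s > 0" using False unfolding s_def by (metis sum_nonneg abs_ge_zero order_le_less)
      define c' where "c' = (\<lambda>b. if b \<in> B then c b / s else 0)"
      have le: "\<bar>c b\<bar> \<le> s" if "b \<in> B" for b
        unfolding s_def using fin that by (intro member_le_sum) auto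
      have "c' \<in> K" unfolding K_def
      proof (intro IntI CollectI)
        show "c' \<in> PiE UNIV (\<lambda>b. if b \<in> B then {-1..1} else {0})"
          using le spos by (force simp: c'_def PiE_def abs_le_iff divide_le_eq le_divide_eq)
        have "(\<Sum>b\<in>B. \<bar>c' b\<bar>) = (\<Sum>b\<in>B. \<bar>c b\<bar> / s)"
          by (rule sum.cong) (use spos in \<open>auto simp: c'_def\<close>)
        also have "\<dots> = 1" using spos unfolding s_def[symmetric] sum_divide_distrib[symmetric] by simp
        finally show "(\<Sum>b\<in>B. \<bar>c' b\<bar>) = 1" .
      qed
      then have "m \<le> norm (\<Sum>b\<in>B. c' b *\<^sub>R b)" unfolding m_def by (rule c0min)
      also have "(\<Sum>b\<in>B. c' b *\<^sub>R b) = (1/s) *\<^sub>R (\<Sum>b\<in>B. c b *\<^sub>R b)"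
        unfolding scaleR_sum_right by (rule sum.cong) (auto simp: c'_def)
      also have "norm \<dots> = norm (\<Sum>b\<in>B. c b *\<^sub>R b) / s" using spos by simp
      finally show ?thesis using spos unfolding s_def[symmetric] by (simp add: field_simps)
    qed
  qed
  ultimately show ?thesis by blast
qed

lemma fin_dim_net:
  fixes B :: "'a::real_normed_vector set"
  assumes finB: "finite B" and dpos: "d > 0"
  shows "\<exists>N. finite N \<and> (\<forall>T\<in>span B. norm T = 1 \<longrightarrow> (\<exists>S\<in>N. norm (T - S) < d))"
proof -
  obtain B0 where B0: "B0 \<subseteq> B" "independent B0" "B \<subseteq> span B0"
    by (rule maximal_independent_subset[of B]) blast
  have fin0: "finite B0" using B0 finB finite_subset by blast
  have spB: "span B = span B0" using B0 by (metis span_mono span_span subset_antisym)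
  obtain m where m: "m > 0" "\<And>c. m * (\<Sum>b\<in>B0. \<bar>c b\<bar>) \<le> norm (\<Sum>b\<in>B0. c b *\<^sub>R b)"
    using indep_bounded_below[OF fin0 B0(2)] by blast
  define K where "K = PiE UNIV (\<lambda>b. if b \<in> B0 then {-(1/m)..1/m} else {0::real})"
  define phi where "phi c = (\<Sum>b\<in>B0. c b *\<^sub>R b)" for c :: "'a \<Rightarrow> real"
  have cK: "compact (phi ` K)" unfolding K_def phi_def
    by (rule compact_continuous_image[OF continuous_on_subset[OF cont_lincomb] compact_box_fun]) auto
  obtain N where N: "N \<subseteq> phi ` K" "finite N" "phi ` K \<subseteq> (\<Union>S\<in>N. ball S d)"
    by (rule compactE_image[OF cK, of "phi ` K" "\<lambda>S. ball S d"]) (use dpos in auto)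
  have "\<exists>S\<in>N. norm (T - S) < d" if T: "T \<in> span B" "norm T = 1" for T
  proof -
    obtain u where u: "T = (\<Sum>b\<in>B0. u b *\<^sub>R b)"
      using T(1) unfolding spB span_finite[OF fin0] by blast
    define c where "c b = (if b \<in> B0 then u b else 0)" for b
    have Tc: "T = phi c" unfolding u phi_def c_def by (rule sum.cong) auto
    have "m * (\<Sum>b\<in>B0. \<bar>u b\<bar>) \<le> 1" using m(2)[of u] u T(2) by simp
    then have su: "(\<Sum>b\<in>B0. \<bar>u b\<bar>) \<le> 1/m" using m(1) by (simp add: field_simps)
    have "\<bar>u b\<bar> \<le> 1/m" if "b \<in> B0" for b
      using member_le_sum[of b B0 "\<lambda>b. \<bar>u b\<bar>"] that fin0 su by auto
    then have "c \<in> K" unfolding K_def c_def by (force simp: PiE_def abs_le_iff)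
    then have "T \<in> phi ` K" using Tc by auto
    then obtain S where "S \<in> N" "T \<in> ball S d" using N(3) by blast
    then show ?thesis by (auto simp: dist_norm norm_minus_commute)
  qed
  then show ?thesis using N(2) by blast
qed



lemma linf_norm_ge: "i < n \<Longrightarrow> \<bar>a i\<bar> \<le> linf_norm n a"
  unfolding linf_norm_def
  by (rule Max_ge) (auto simp: setcompr_eq_image)

lemma linf_norm_le: "0 \<le> M \<Longrightarrow> (\<And>i. i < n \<Longrightarrow> \<bar>a i\<bar> \<le> M) \<Longrightarrow> linf_norm n a \<le> M"
  unfolding linf_norm_def
  by (subst Max_le_iff) (auto simp: setcompr_eq_image)

lemma linf_op_scale: "linf_op n x (\<lambda>j. c * a j) = c *\<^sub>R linf_op n x a"
  unfolding linf_op_def scaleR_sum_right by (simp add: scaleR_scaleR)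

lemma norming_vector:
  fixes T :: "'y::real_normed_vector \<Rightarrow>\<^sub>L 'x::real_normed_vector"
  assumes "\<exists>y::'y. y \<noteq> 0" "d > 0"
  shows "\<exists>y. norm y = 1 \<and> norm T - d \<le> norm (blinfun_apply T y)"
proof (rule ccontr)
  assume "\<not> ?thesis"
  then have lt: "\<And>y. norm y = 1 \<Longrightarrow> norm (blinfun_apply T y) < norm T - d" by force
  obtain y0 :: 'y where "y0 \<noteq> 0" using assms by blast
  then have "norm ((1/norm y0) *\<^sub>R y0) = 1" by simp
  from lt[OF this] have nn: "0 \<le> norm T - d" by (smt (verit) norm_ge_zero)
  have "norm (blinfun_apply T x) \<le> (norm T - d) * norm x" for x
  proof (cases "x = 0")
    case True then show ?thesis by simp
  next
    case False
    then have "norm ((1/norm x) *\<^sub>R x) = 1" by simp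
    from lt[OF this] have "norm (blinfun_apply T x) / norm x < norm T - d"
      by (simp add: blinfun.scaleR_right)
    then show ?thesis using False by (simp add: divide_less_eq)
  qed
  then have "norm T \<le> norm T - d" by (rule norm_blinfun_bound[OF nn])
  then show False using assms by simp
qed


theorem theorem3p6:
  fixes H :: "('y::banach \<Rightarrow>\<^sub>L 'x::banach) set"
  assumes hyp: "\<forall>\<epsilon>>0. \<forall>Z::'x set. \<forall>n::nat. subspace Z \<and> fin_dim_subspace Z \<longrightarrow>
      (\<exists>x::nat \<Rightarrow> 'x.
         (\<forall>a. norm (linf_op n x a) \<le> linf_norm n a) \<and>
         (\<forall>a. \<forall>z\<in>Z. norm (z + linf_op n x a) \<ge> (1 - \<epsilon>) * (norm z + linf_norm n a)))"
    and Y_nonzero: "\<exists>y::'y. y \<noteq> 0"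
    and H_sub: "subspace H"
    and H_closed: "closed H"
    and H_fin: "{T. finite_rank T} \<subseteq> H"
  shows "octahedral H"
  unfolding octahedral_def
proof (intro allI impI)
  fix E \<epsilon> assume asm: "E \<subseteq> H \<and> fin_dim_subspace E \<and> (\<epsilon>::real) > 0"
  then obtain B where finB: "finite B" and EB: "E = span B" and ep: "\<epsilon> > 0"
    unfolding fin_dim_subspace_def by blast
  define e where "e = min \<epsilon> 1"
  have e: "0 < e" "e \<le> 1" "e \<le> \<epsilon>" using ep by (auto simp: e_def)
  define d where "d = e / 8"
  have d: "0 < d" "d \<le> 1/8" "8 * d = e" using e by (auto simp: d_def)
  obtain N where finN: "finite N" and netN: "\<And>T. T \<in> span B \<Longrightarrow> norm T = 1 \<Longrightarrow> \<exists>S\<in>N. norm (T - S) < d"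
    using fin_dim_net[OF finB d(1)] by blast
  obtain n0 :: nat and g where Ng: "N = g ` {i. i < n0}"
    using finite_imp_nat_seg_image_inj_on[OF finN] by (elim exE conjE) simp
  define n where "n = Suc n0"
  define Tj where "Tj j = (if j < n0 then g j else 0)" for j
  have "\<forall>j. \<exists>y. norm y = 1 \<and> norm (Tj j) - d \<le> norm (blinfun_apply (Tj j) y)"
    using norming_vector[OF Y_nonzero d(1)] by blast
  then obtain y where y1: "\<And>j. norm (y j) = 1" and yn: "\<And>j. norm (Tj j) - d \<le> norm (blinfun_apply (Tj j) (y j))"
    by metis
  have "\<forall>j. \<exists>f. linear f \<and> (\<forall>v. \<bar>f v\<bar> \<le> norm v) \<and> f (y j) = norm (y j)"
    using hb_norming by blast
  then obtain F where Flin: "\<And>j. linear (F j)" and Fb: "\<And>j v. \<bar>F j v\<bar> \<le> norm v"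
    and Fy: "\<And>j. F j (y j) = 1"
    using y1 by metis
  define Z where "Z = span ((\<lambda>j. blinfun_apply (Tj j) (y j)) ` {..<n})"
  have Zs: "subspace Z" "fin_dim_subspace Z"
    unfolding Z_def fin_dim_subspace_def by (auto intro: subspace_span)
  obtain x where xb: "\<And>a. norm (linf_op n x a) \<le> linf_norm n a"
    and xh: "\<And>a z. z \<in> Z \<Longrightarrow> norm (z + linf_op n x a) \<ge> (1 - d) * (norm z + linf_norm n a)"
    using hyp d(1) Zs by blast
  define S0f where "S0f v = linf_op n x (\<lambda>j. F j v)" for v
  have S0b: "norm (S0f v) \<le> norm v" for v
    using xb[of "\<lambda>j. F j v"] linf_norm_le[of "norm v" n "\<lambda>j. F j v"] Fb unfolding S0f_def
    by (meson norm_ge_zero order_trans)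
  have blS0: "bounded_linear S0f"
  proof (rule bounded_linear_intro[where K=1])
    show "S0f (u + v) = S0f u + S0f v" for u v
      unfolding S0f_def linf_op_def using Flin by (simp add: linear_add scaleR_add_left sum.distrib)
    show "S0f (r *\<^sub>R v) = r *\<^sub>R S0f v" for r v
      unfolding S0f_def linf_op_def using Flin by (simp add: linear_scale scaleR_sum_right)
    show "norm (S0f v) \<le> norm v * 1" for v using S0b by simp
  qed
  define S0 where "S0 = Blinfun S0f"
  have S0a: "blinfun_apply S0 = S0f" unfolding S0_def using blS0 by (rule bounded_linear_Blinfun_apply)
  have nS0: "norm S0 \<le> 1" by (rule norm_blinfun_bound) (use S0b S0a in auto)
  have "finite_rank S0"
    unfolding finite_rank_def
  proof (intro exI conjI)
    show "finite (x ` {..<n})" by simp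
    show "range (blinfun_apply S0) \<subseteq> span (x ` {..<n})"
      unfolding S0a S0f_def linf_op_def
      by (clarsimp, intro span_sum span_scale span_base) auto
  qed
  then have S0H: "S0 \<in> H" using H_fin by blast
  define \<sigma> where "\<sigma> = norm S0"
  have "1 - d \<le> \<sigma>"
  proof -
    have "(1 - d) * (norm (0::'x) + linf_norm n (\<lambda>j. F j (y 0))) \<le> norm (0 + linf_op n x (\<lambda>j. F j (y 0)))"
      using xh[of 0] Zs(1) by (simp add: subspace_0)
    moreover have "1 \<le> linf_norm n (\<lambda>j. F j (y 0))"
      using linf_norm_ge[of 0 n "\<lambda>j. F j (y 0)"] Fy n_def by simp
    moreover have "norm (S0f (y 0)) \<le> \<sigma>"
      using norm_blinfun[of S0 "y 0"] y1 S0a \<sigma>_def by simp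
    moreover have "(1 - d) * 1 \<le> (1 - d) * linf_norm n (\<lambda>j. F j (y 0))"
      using calculation(2) d by (intro mult_left_mono) auto
    ultimately show ?thesis unfolding S0f_def by simp
  qed
  then have \<sigma>: "0 < \<sigma>" "\<sigma> \<le> 1" using d nS0 \<sigma>_def by auto
  define S where "S = (1/\<sigma>) *\<^sub>R S0"
  have SH: "S \<in> H" unfolding S_def using H_sub S0H by (rule subspace_scale)
  have nS: "norm S = 1" unfolding S_def \<sigma>_def using \<sigma> \<sigma>_def by simp
  have main: "(1 - e) * (1 + \<bar>s\<bar>) \<le> norm (T' + s *\<^sub>R S)" if T': "T' \<in> E" "norm T' = 1" for T' s
  proof -
    obtain S' where S': "S' \<in> N" "norm (T' - S') < d" using netN T' EB by blast
    then obtain i where i: "i < n0" "S' = g i" using Ng by blast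
    have Ti: "Tj i = S'" using i Tj_def by simp
    have in_: "i < n" using i n_def by simp
    have "1 \<le> norm (T' - S') + norm S'" using norm_triangle_ineq[of "T' - S'" S'] T' by simp
    then have nSi: "1 - d \<le> norm S'" using S' by simp
    have zi: "norm (blinfun_apply S' (y i)) \<ge> 1 - 2 * d" using yn[of i] Ti nSi by simp
    define b where "b j = (s / \<sigma>) * F j (y i)" for j
    have "linf_norm n b \<ge> \<bar>s\<bar> / \<sigma>"
      using linf_norm_ge[OF in_, of b] Fy[of i] \<sigma> by (simp add: b_def abs_mult)
    moreover have "\<bar>s\<bar> / \<sigma> \<ge> \<bar>s\<bar>" using \<sigma> by (simp add: le_divide_eq mult_left_le)
    ultimately have lb: "linf_norm n b \<ge> \<bar>s\<bar>" by linarith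
    have zZ: "blinfun_apply S' (y i) \<in> Z" unfolding Z_def using in_ Ti by (auto intro!: span_base)
    have eqv: "blinfun_apply (S' + s *\<^sub>R S) (y i) = blinfun_apply S' (y i) + linf_op n x b"
    proof -
      have "linf_op n x b = (s / \<sigma>) *\<^sub>R S0f (y i)" unfolding b_def S0f_def by (rule linf_op_scale)
      then show ?thesis unfolding S_def by (simp add: S0a plus_blinfun.rep_eq scaleR_blinfun.rep_eq)
    qed
    have "(1 - d) * (1 - 2 * d + \<bar>s\<bar>) \<le> (1 - d) * (norm (blinfun_apply S' (y i)) + linf_norm n b)"
      using zi lb d by (intro mult_left_mono) auto
    also have "\<dots> \<le> norm (blinfun_apply (S' + s *\<^sub>R S) (y i))" using xh[OF zZ, of b] eqv by simp
    also have "\<dots> \<le> norm (S' + s *\<^sub>R S)" using norm_blinfun[of "S' + s *\<^sub>R S" "y i"] y1 by simp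
    also have "\<dots> \<le> norm (T' + s *\<^sub>R S) + norm (T' - S')"
      using norm_triangle_ineq[of "T' + s *\<^sub>R S" "S' - T'"] by (simp add: norm_minus_commute algebra_simps)
    finally have A: "(1 - d) * (1 - 2 * d + \<bar>s\<bar>) - d \<le> norm (T' + s *\<^sub>R S)" using S' by simp
    have "(1 - e) * (1 + \<bar>s\<bar>) \<le> (1 - d) * (1 - 2 * d + \<bar>s\<bar>) - d"
    proof -
      have "(1 - d) * (1 - 2 * d) - d = 1 - 4 * d + 2 * (d * d)" by (simp add: algebra_simps)
      moreover have "0 \<le> d * d" by simp
      ultimately have "1 - e \<le> (1 - d) * (1 - 2 * d) - d" using d by linarith
      moreover have "(1 - e) * \<bar>s\<bar> \<le> (1 - d) * \<bar>s\<bar>" using d by (intro mult_right_mono) auto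
      ultimately show ?thesis by (simp add: algebra_simps)
    qed
    then show ?thesis using A by linarith
  qed
  show "\<exists>y\<in>H. norm y = 1 \<and> (\<forall>x\<in>E. \<forall>t. (1 - \<epsilon>) * (norm x + \<bar>t\<bar>) \<le> norm (x + t *\<^sub>R y))"
  proof (intro bexI[OF _ SH] conjI nS ballI allI)
    fix T t assume TE: "T \<in> E"
    show "(1 - \<epsilon>) * (norm T + \<bar>t\<bar>) \<le> norm (T + t *\<^sub>R S)"
    proof (cases "T = 0")
      case True
      have "(1 - \<epsilon>) * \<bar>t\<bar> \<le> 1 * \<bar>t\<bar>" using ep by (intro mult_right_mono) auto
      then show ?thesis using True nS by simp
    next
      case False
      define \<tau> where "\<tau> = norm T"
      have \<tau>: "\<tau> > 0" using False \<tau>_def by simp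
      have T'E: "(1/\<tau>) *\<^sub>R T \<in> E" using TE EB by (simp add: span_scale)
      have "norm ((1/\<tau>) *\<^sub>R T) = 1" using \<tau> \<tau>_def by simp
      from main[OF T'E this, of "t / \<tau>"]
      have "(1 - e) * (1 + \<bar>t / \<tau>\<bar>) \<le> norm ((1/\<tau>) *\<^sub>R T + (t/\<tau>) *\<^sub>R S)" .
      also have "(1/\<tau>) *\<^sub>R T + (t/\<tau>) *\<^sub>R S = (1/\<tau>) *\<^sub>R (T + t *\<^sub>R S)" by (simp add: algebra_simps)
      also have "norm \<dots> = norm (T + t *\<^sub>R S) / \<tau>" using \<tau> by simp
      finally have "\<tau> * ((1 - e) * (1 + \<bar>t / \<tau>\<bar>)) \<le> norm (T + t *\<^sub>R S)"
        using \<tau> by (simp add: le_divide_eq mult.commute)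
      moreover have "\<tau> * ((1 - e) * (1 + \<bar>t / \<tau>\<bar>)) = (1 - e) * (\<tau> + \<bar>t\<bar>)"
        using \<tau> by (simp add: abs_div field_simps)
      moreover have "(1 - \<epsilon>) * (\<tau> + \<bar>t\<bar>) \<le> (1 - e) * (\<tau> + \<bar>t\<bar>)"
        using e \<tau> by (intro mult_right_mono) auto
      ultimately show ?thesis unfolding \<tau>_def by linarith
    qed
  qed
qed

end
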